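(* Let $\mathcal{H}=\bigotimes_{i=1}^n\mathcal{H}_i$ with $\dim\mathcal{H}_i=d_i$. For every unitary $U\in U(d_1\cdots d_n)$ and every non-trivial unordered bipartition $p|q$ of $\{1,\dots,n\}$, $\epsilon_{p|q}(U)\le\tilde\epsilon_{p|q}$, and consequently $\epsilon_1(U)\le\tilde\epsilon_1:=\frac{1}{2^{n-1}-1}\sum_{p|q}\tilde\epsilon_{p|q}$, where $$\tilde\epsilon_{p|q}:=2-2\Bigg(\prod_{i=1}^n\frac{d_i}{d_i+1}\Bigg)\left[2^n-\sum_{x'|y'}\frac{\min(d_{px'},d_{qy'})-1}{\min(d_{px'},d_{qy'})}\right],$$ the sum being over all $2^n$ ordered bipartitions $x'|y'$ of $\{1',\dots,n'\}$ (including trivial ones), $d_{px'}=\prod_{i\in p}d_i\prod_{i'\in x'}d_i$ and $d_{qy'}=\prod_{i\in q}d_i\prod_{i'\in y'}d_i$.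
   Context: For a pure state $|\psi\rangle\in\mathcal{H}$ and a bipartition $p|q$ of $\{1,\dots,n\}$, $\tau_{p|q}(|\psi\rangle)=2\big(1-\operatorname{tr}[(\operatorname{tr}_p|\psi\rangle\langle\psi|)^2]\big)$; the $n$-party one-tangle is $\tau_1=\frac{1}{2^{n-1}-1}\sum_{p|q}\tau_{p|q}$ (sum over non-trivial unordered bipartitions). $\epsilon_{p|q}(U)$ (resp. $\epsilon_1(U)$) is the average of $\tau_{p|q}(U|\psi_{\rm sep}\rangle)$ (resp. $\tau_1(U|\psi_{\rm sep}\rangle)$) over $|\psi_{\rm sep}\rangle=|\psi_1\rangle\otimes\cdots\otimes|\psi_n\rangle$, each $|\psi_i\rangle$ drawn independently from the unitarily invariant measure on pure states of $\mathcal{H}_i$. The primed labels $1',\dots,n'$ refer to a copy $\mathcal{H}'=\bigotimes_i\mathcal{H}_{i'}$ of $\mathcal{H}$, $\dim\mathcal{H}_{i'}=d_i$. *)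

theory Defs
  imports "HOL-Probability.Probability"
begin

text \<open>Computational basis of H = H_1 (x) ... (x) H_n, dm H_i = d i:
  index tuples j with j i < d i for i < n (extensional outside {..<n}).\<close>
definition basis_idx :: "(nat \<Rightarrow> nat) \<Rightarrow> nat \<Rightarrow> (nat \<Rightarrow> nat) set" where
  "basis_idx d n = PiE {..<n} (\<lambda>i. {..<d i})"

text \<open>A unitary on H, given by its matrix entries U j k w.r.t. the product basis.\<close>
definition unitary_op :: "(nat \<Rightarrow> nat) \<Rightarrow> nat \<Rightarrow> ((nat \<Rightarrow> nat) \<Rightarrow> (nat \<Rightarrow> nat) \<Rightarrow> complex) \<Rightarrow> bool" where
  "unitary_op d n U \<longleftrightarrow> (\<forall>j\<in>basis_idx d n. \<forall>k\<in>basis_idx d n.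
     (\<Sum>l\<in>basis_idx d n. cnj (U l j) * U l k) = (if j = k then 1 else 0))"

definition apply_op :: "(nat \<Rightarrow> nat) \<Rightarrow> nat \<Rightarrow> ((nat \<Rightarrow> nat) \<Rightarrow> (nat \<Rightarrow> nat) \<Rightarrow> complex)
     \<Rightarrow> ((nat \<Rightarrow> nat) \<Rightarrow> complex) \<Rightarrow> ((nat \<Rightarrow> nat) \<Rightarrow> complex)" where
  "apply_op d n U \<psi> = (\<lambda>j. \<Sum>k\<in>basis_idx d n. U j k * \<psi> k)"

definition merge_idx :: "nat set \<Rightarrow> (nat \<Rightarrow> nat) \<Rightarrow> (nat \<Rightarrow> nat) \<Rightarrow> (nat \<Rightarrow> nat)" where
  "merge_idx p a b = (\<lambda>i. if i \<in> p then a i else b i)"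

text \<open>Matrix entries of tr_p |psi><psi| (an operator on the factors in q = {..<n} - p).\<close>
definition reduced_state :: "(nat \<Rightarrow> nat) \<Rightarrow> nat \<Rightarrow> nat set \<Rightarrow> ((nat \<Rightarrow> nat) \<Rightarrow> complex)
     \<Rightarrow> (nat \<Rightarrow> nat) \<Rightarrow> (nat \<Rightarrow> nat) \<Rightarrow> complex" where
  "reduced_state d n p \<psi> b b' =
     (\<Sum>a\<in>PiE p (\<lambda>i. {..<d i}). \<psi> (merge_idx p a b) * cnj (\<psi> (merge_idx p a b')))"

text \<open>tr[(tr_p |psi><psi|)^2] (real for any psi; we take the real part).\<close>
definition purity :: "(nat \<Rightarrow> nat) \<Rightarrow> nat \<Rightarrow> nat set \<Rightarrow> ((nat \<Rightarrow> nat) \<Rightarrow> complex) \<Rightarrow> real" where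
  "purity d n p \<psi> = Re (\<Sum>b\<in>PiE ({..<n} - p) (\<lambda>i. {..<d i}).
       \<Sum>b'\<in>PiE ({..<n} - p) (\<lambda>i. {..<d i}).
         reduced_state d n p \<psi> b b' * reduced_state d n p \<psi> b' b)"

definition tau_bip :: "(nat \<Rightarrow> nat) \<Rightarrow> nat \<Rightarrow> nat set \<Rightarrow> ((nat \<Rightarrow> nat) \<Rightarrow> complex) \<Rightarrow> real" where
  "tau_bip d n p \<psi> = 2 * (1 - purity d n p \<psi>)"

definition nontrivial_bip :: "nat \<Rightarrow> nat set \<Rightarrow> bool" where
  "nontrivial_bip n p \<longleftrightarrow> p \<subseteq> {..<n} \<and> p \<noteq> {} \<and> p \<noteq> {..<n}"

text \<open>Non-trivial unordered bipartitions p|q, each represented once by the part p containing 0.\<close>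
definition unordered_bips :: "nat \<Rightarrow> nat set set" where
  "unordered_bips n = {p. p \<subseteq> {..<n} \<and> 0 \<in> p \<and> p \<noteq> {..<n}}"

definition one_tangle :: "(nat \<Rightarrow> nat) \<Rightarrow> nat \<Rightarrow> ((nat \<Rightarrow> nat) \<Rightarrow> complex) \<Rightarrow> real" where
  "one_tangle d n \<psi> = (1 / (2 ^ (n - 1) - 1)) * (\<Sum>p\<in>unordered_bips n. tau_bip d n p \<psi>)"

text \<open>Pure states of C^dm as vectors nat => complex supported on {..<dm}.\<close>
definition unit_sphere_vec :: "nat \<Rightarrow> (nat \<Rightarrow> complex) set" where
  "unit_sphere_vec dm = {v. (\<forall>k\<ge>dm. v k = 0) \<and> (\<Sum>k<dm. (cmod (v k))\<^sup>2) = 1}"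

definition unitary_mat :: "nat \<Rightarrow> (nat \<Rightarrow> nat \<Rightarrow> complex) \<Rightarrow> bool" where
  "unitary_mat dm V \<longleftrightarrow> (\<forall>j<dm. \<forall>k<dm.
     (\<Sum>l<dm. cnj (V l j) * V l k) = (if j = k then 1 else 0))"

definition mat_apply :: "nat \<Rightarrow> (nat \<Rightarrow> nat \<Rightarrow> complex) \<Rightarrow> (nat \<Rightarrow> complex) \<Rightarrow> (nat \<Rightarrow> complex)" where
  "mat_apply dm V v = (\<lambda>k. if k < dm then \<Sum>l<dm. V k l * v l else 0)"

text \<open>mu is the unitarily invariant probability measure on pure states of C^dm:
  a Borel probability measure concentrated on the unit sphere and invariant under
  every unitary (such a measure exists and is unique).\<close>
definition unitarily_invariant_state_measure :: "nat \<Rightarrow> (nat \<Rightarrow> complex) measure \<Rightarrow> bool" where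
  "unitarily_invariant_state_measure dm \<mu> \<longleftrightarrow>
     prob_space \<mu> \<and> sets \<mu> = sets borel \<and> emeasure \<mu> (unit_sphere_vec dm) = 1 \<and>
     (\<forall>V. unitary_mat dm V \<longrightarrow> distr \<mu> borel (mat_apply dm V) = \<mu>)"

definition sep_state :: "nat \<Rightarrow> (nat \<Rightarrow> nat \<Rightarrow> complex) \<Rightarrow> ((nat \<Rightarrow> nat) \<Rightarrow> complex)" where
  "sep_state n \<omega> = (\<lambda>j. \<Prod>i<n. \<omega> i (j i))"

definition eps_bip :: "(nat \<Rightarrow> nat) \<Rightarrow> nat \<Rightarrow> (nat \<Rightarrow> (nat \<Rightarrow> complex) measure)
     \<Rightarrow> ((nat \<Rightarrow> nat) \<Rightarrow> (nat \<Rightarrow> nat) \<Rightarrow> complex) \<Rightarrow> nat set \<Rightarrow> real" where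
  "eps_bip d n M U p =
     (\<integral>\<omega>. tau_bip d n p (apply_op d n U (sep_state n \<omega>)) \<partial>(PiM {..<n} M))"

definition eps_one :: "(nat \<Rightarrow> nat) \<Rightarrow> nat \<Rightarrow> (nat \<Rightarrow> (nat \<Rightarrow> complex) measure)
     \<Rightarrow> ((nat \<Rightarrow> nat) \<Rightarrow> (nat \<Rightarrow> nat) \<Rightarrow> complex) \<Rightarrow> real" where
  "eps_one d n M U =
     (\<integral>\<omega>. one_tangle d n (apply_op d n U (sep_state n \<omega>)) \<partial>(PiM {..<n} M))"

text \<open>The bound tilde-epsilon_{p|q}; the sum runs over all subsets x' of {1',...,n'}
  (ordered bipartitions x'|y', y' the complement, trivial ones included).\<close>
definition eps_tilde_bip :: "(nat \<Rightarrow> nat) \<Rightarrow> nat \<Rightarrow> nat set \<Rightarrow> real" where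
  "eps_tilde_bip d n p =
     2 - 2 * (\<Prod>i<n. real (d i) / (real (d i) + 1)) *
       (2 ^ n - (\<Sum>x\<in>Pow {..<n}.
          let m = min ((\<Prod>i\<in>p. d i) * (\<Prod>i\<in>x. d i))
                      ((\<Prod>i\<in>{..<n} - p. d i) * (\<Prod>i\<in>{..<n} - x. d i))
          in (real m - 1) / real m))"

definition eps_tilde_one :: "(nat \<Rightarrow> nat) \<Rightarrow> nat \<Rightarrow> real" where
  "eps_tilde_one d n = (1 / (2 ^ (n - 1) - 1)) * (\<Sum>p\<in>unordered_bips n. eps_tilde_bip d n p)"

end

theory Submission
  imports Defs
begin

definition mom :: "(nat \<Rightarrow> complex) measure \<Rightarrow> nat \<Rightarrow> nat \<Rightarrow> nat \<Rightarrow> nat \<Rightarrow> complex" where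
  "mom \<mu> a b c e = (\<integral>v. v a * cnj (v b) * v c * cnj (v e) \<partial>\<mu>)"

lemma mono_meas[measurable]:
  "(\<lambda>v::nat\<Rightarrow>complex. v a * cnj (v b) * v c * cnj (v e)) \<in> borel_measurable borel"
  by (intro borel_measurable_continuous_onI continuous_intros continuous_on_product_coordinates)

lemma mat_apply_meas: "mat_apply dm V \<in> borel_measurable borel"
  unfolding mat_apply_def
  by (rule measurable_coordinatewise_then_product) measurable

lemma sphere_AE:
  assumes "unitarily_invariant_state_measure dm \<mu>"
  shows "AE v in \<mu>. v \<in> unit_sphere_vec dm"
proof -
  interpret prob_space \<mu> using assms unfolding unitarily_invariant_state_measure_def by auto
  have e: "emeasure \<mu> (unit_sphere_vec dm) = 1" using assms unfolding unitarily_invariant_state_measure_def by auto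
  then have s: "unit_sphere_vec dm \<in> sets \<mu>" using emeasure_notin_sets by fastforce
  show ?thesis using AE_in_set_eq_1[OF s] e by (simp add: emeasure_eq_measure)
qed

lemma sphere_bound:
  assumes "v \<in> unit_sphere_vec dm" shows "cmod (v k) \<le> 1"
proof (cases "k < dm")
  case True
  have "(cmod (v k))\<^sup>2 \<le> (\<Sum>k<dm. (cmod (v k))\<^sup>2)"
    by (rule member_le_sum) (use True in auto)
  also have "\<dots> = 1" using assms unfolding unit_sphere_vec_def by auto
  finally show ?thesis by (simp add: power_le_one_iff abs_le_square_iff)
next
  case False then show ?thesis using assms unfolding unit_sphere_vec_def by auto
qed

lemma mono_int:
  assumes "unitarily_invariant_state_measure dm \<mu>"
  shows "integrable \<mu> (\<lambda>v. v a * cnj (v b) * v c * cnj (v e))"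
proof -
  interpret prob_space \<mu> using assms unfolding unitarily_invariant_state_measure_def by auto
  have ss: "sets \<mu> = sets borel" using assms unfolding unitarily_invariant_state_measure_def by auto
  show ?thesis
  proof (rule integrable_const_bound[where B=1])
    show "AE v in \<mu>. norm (v a * cnj (v b) * v c * cnj (v e)) \<le> 1"
      using sphere_AE[OF assms]
    proof eventually_elim
      case (elim v)
      have "norm (v a * cnj (v b) * v c * cnj (v e)) = cmod (v a) * cmod (v b) * cmod (v c) * cmod (v e)"
        by (simp add: norm_mult)
      also have "\<dots> \<le> 1 * 1 * 1 * 1"
        using sphere_bound[OF elim] by (intro mult_mono) auto
      finally show ?case by simp
    qed
    show "(\<lambda>v. v a * cnj (v b) * v c * cnj (v e)) \<in> borel_measurable \<mu>"
      by (subst measurable_cong_sets[OF ss refl]) (rule mono_meas)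
  qed
qed

lemma invariance:
  assumes "unitarily_invariant_state_measure dm \<mu>" "unitary_mat dm V"
    and h: "(h :: (nat \<Rightarrow> complex) \<Rightarrow> complex) \<in> borel_measurable borel"
  shows "integral\<^sup>L \<mu> h = integral\<^sup>L \<mu> (\<lambda>v. h (mat_apply dm V v))"
proof -
  have ss: "sets \<mu> = sets borel" and eq: "distr \<mu> borel (mat_apply dm V) = \<mu>"
    using assms unfolding unitarily_invariant_state_measure_def by auto
  have m: "mat_apply dm V \<in> measurable \<mu> borel"
    by (subst measurable_cong_sets[OF ss refl]) (rule mat_apply_meas)
  have "integral\<^sup>L \<mu> h = integral\<^sup>L (distr \<mu> borel (mat_apply dm V)) h" using eq by simp
  also have "\<dots> = integral\<^sup>L \<mu> (\<lambda>v. h (mat_apply dm V v))"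
    by (rule integral_distr[OF m h])
  finally show ?thesis .
qed

lemma sum4: "(sum A I) * (sum B J) * (sum C K) * (sum E L) =
  (\<Sum>a\<in>I. \<Sum>b\<in>J. \<Sum>c\<in>K. \<Sum>e\<in>L. A a * B b * C c * (E e :: complex))"
  by (simp add: sum_distrib_left[symmetric] sum_distrib_right[symmetric])

lemma mom_inv:
  assumes U: "unitarily_invariant_state_measure dm \<mu>" and V: "unitary_mat dm V"
    and abce: "a < dm" "b < dm" "c < dm" "e < dm"
  shows "mom \<mu> a b c e = (\<Sum>a'<dm. \<Sum>b'<dm. \<Sum>c'<dm. \<Sum>e'<dm.
     V a a' * cnj (V b b') * V c c' * cnj (V e e') * mom \<mu> a' b' c' e')"
proof -
  have "mom \<mu> a b c e = (\<integral>v. (\<lambda>w. w a * cnj (w b) * w c * cnj (w e)) (mat_apply dm V v) \<partial>\<mu>)"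
    unfolding mom_def by (rule invariance[OF U V mono_meas])
  also have "\<dots> = (\<integral>v. (\<Sum>a'<dm. \<Sum>b'<dm. \<Sum>c'<dm. \<Sum>e'<dm.
     V a a' * cnj (V b b') * V c c' * cnj (V e e') * (v a' * cnj (v b') * v c' * cnj (v e'))) \<partial>\<mu>)"
    by (intro Bochner_Integration.integral_cong refl) (use abce in \<open>simp add: mat_apply_def sum4, simp add: mult_ac\<close>)
  also have "\<dots> = (\<Sum>a'<dm. \<Sum>b'<dm. \<Sum>c'<dm. \<Sum>e'<dm.
     V a a' * cnj (V b b') * V c c' * cnj (V e e') * mom \<mu> a' b' c' e')"
    by (simp add: mono_int[OF U] mom_def)
  finally show ?thesis .
qed

lemma mom_comm1: "mom \<mu> a b c e = mom \<mu> c b a e"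
  unfolding mom_def by (simp add: mult_ac)
lemma mom_comm2: "mom \<mu> a b c e = mom \<mu> a e c b"
  unfolding mom_def by (simp add: mult_ac)

lemma sum_delta2:
  assumes "finite A"
  shows "(\<Sum>l\<in>A. (if j = l then f l else 0) * (if k = l then g l else (0::'a::semiring_0)))
       = (if j = k \<and> j \<in> A then f j * g j else 0)"
proof -
  have "(\<Sum>l\<in>A. (if j = l then f l else 0) * (if k = l then g l else (0::'a)))
      = (\<Sum>l\<in>A. if j = l then (if j = k then f j * g j else 0) else 0)"
    by (intro sum.cong refl) auto
  also have "\<dots> = (if j = k \<and> j \<in> A then f j * g j else 0)"
    using assms by (simp add: sum.delta)
  finally show ?thesis .
qed

lemma cnj_if: "cnj (if P then x else 0) = (if P then cnj x else 0)" by simp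

lemma sdm: "(t::nat) < dm \<Longrightarrow> (\<Sum>x<dm. (if x = t then c else 0) * F x) = (c::complex) * F t"
proof -
  assume t: "t < dm"
  have "(\<Sum>x<dm. (if x = t then c else 0) * F x) = (\<Sum>x<dm. if x = t then c * F t else 0)"
    by (intro sum.cong refl) auto
  also have "\<dots> = c * F t" using t by (subst sum.delta) auto
  finally show ?thesis .
qed

lemma mom_mono:
  assumes U: "unitarily_invariant_state_measure dm \<mu>" and V: "unitary_mat dm V"
    and Vf: "\<And>l k. l < dm \<Longrightarrow> V l k = (if k = \<sigma> l then w l else 0)"
    and sig: "\<And>l. l < dm \<Longrightarrow> \<sigma> l < dm"
    and abce: "a < dm" "b < dm" "c < dm" "e < dm"
  shows "mom \<mu> a b c e = w a * cnj (w b) * w c * cnj (w e) * mom \<mu> (\<sigma> a) (\<sigma> b) (\<sigma> c) (\<sigma> e)"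
proof -
  have "mom \<mu> a b c e = (\<Sum>a'<dm. \<Sum>b'<dm. \<Sum>c'<dm. \<Sum>e'<dm.
     V a a' * cnj (V b b') * V c c' * cnj (V e e') * mom \<mu> a' b' c' e')"
    by (rule mom_inv[OF U V abce])
  also have "\<dots> = (\<Sum>a'<dm. V a a' * (\<Sum>b'<dm. cnj (V b b') * (\<Sum>c'<dm. V c c' *
      (\<Sum>e'<dm. cnj (V e e') * mom \<mu> a' b' c' e'))))"
    by (simp add: sum_distrib_left mult.assoc)
  also have "\<dots> = w a * cnj (w b) * w c * cnj (w e) * mom \<mu> (\<sigma> a) (\<sigma> b) (\<sigma> c) (\<sigma> e)"
    using abce sig by (simp add: Vf cnj_if sdm mult.assoc)
  finally show ?thesis .
qed

lemma mom_phase: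
  assumes U: "unitarily_invariant_state_measure dm \<mu>"
    and th: "\<And>k. k < dm \<Longrightarrow> cmod (\<theta> k) = 1"
    and abce: "a < dm" "b < dm" "c < dm" "e < dm"
  shows "mom \<mu> a b c e = \<theta> a * cnj (\<theta> b) * \<theta> c * cnj (\<theta> e) * mom \<mu> a b c e"
proof -
  define V where "V = (\<lambda>l k. if k = l then \<theta> l else (0::complex))"
  have "unitary_mat dm V"
    unfolding unitary_mat_def
  proof (intro allI impI)
    fix j k assume jk: "j < dm" "k < dm"
    have "cnj (\<theta> j) * \<theta> j = 1"
      using th[OF jk(1)] by (simp add: complex_mult_cnj cmod_power2[symmetric] mult.commute)
    moreover have "(\<Sum>l<dm. cnj (V l j) * V l k) = (\<Sum>l<dm. (if j = l then cnj (\<theta> l) else 0) * (if k = l then \<theta> l else 0))"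
      by (intro sum.cong refl) (auto simp: V_def)
    ultimately show "(\<Sum>l<dm. cnj (V l j) * V l k) = (if j = k then 1 else 0)"
      using jk by (cases "j = k") (auto simp: sum_delta2)
  qed
  moreover have "\<And>l k. l < dm \<Longrightarrow> V l k = (if k = id l then \<theta> l else 0)"
    by (simp add: V_def)
  moreover have "\<And>l. l < dm \<Longrightarrow> id l < dm" by simp
  ultimately have "mom \<mu> a b c e = \<theta> a * cnj (\<theta> b) * \<theta> c * cnj (\<theta> e) *
     mom \<mu> (id a) (id b) (id c) (id e)"
    by (rule mom_mono[OF U _ _ _ abce])
  then show ?thesis by simp
qed

lemma mom_zero1:
  assumes U: "unitarily_invariant_state_measure dm \<mu>"
    and abce: "a < dm" "b < dm" "c < dm" "e < dm" and ne: "a \<noteq> b" "a \<noteq> e"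
  shows "mom \<mu> a b c e = 0"
proof -
  define \<theta> where "\<theta> = (\<lambda>k. if k = a then \<i> else (1::complex))"
  define f where "f = \<theta> a * cnj (\<theta> b) * \<theta> c * cnj (\<theta> e)"
  define m where "m = mom \<mu> a b c e"
  have eq: "m = f * m"
    unfolding f_def m_def by (rule mom_phase[OF U _ abce]) (simp add: \<theta>_def)
  have "f = (if c = a then -1 else \<i>)"
    using ne by (simp add: \<theta>_def f_def)
  then have f1: "1 - f \<noteq> 0" by (simp add: complex_eq_iff)
  have "(1 - f) * m = m - f * m" by (simp add: algebra_simps)
  also have "\<dots> = 0" using eq by simp
  finally have "m = 0" using f1 by simp
  then show ?thesis by (simp add: m_def)
qed

lemma mom_form:
  assumes U: "unitarily_invariant_state_measure dm \<mu>"
    and abce: "a < dm" "b < dm" "c < dm" "e < dm"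
  shows "mom \<mu> a b c e = (if (a = b \<and> c = e) \<or> (a = e \<and> c = b) then mom \<mu> a a c c else 0)"
proof (cases "(a = b \<and> c = e) \<or> (a = e \<and> c = b)")
  case True
  then show ?thesis
  proof (elim disjE conjE)
    assume "a = b" "c = e" then show ?thesis by simp
  next
    assume h: "a = e" "c = b"
    have "mom \<mu> a b c e = mom \<mu> a e c b" by (rule mom_comm2)
    then show ?thesis using h by simp
  qed
next
  case False
  have z2: "mom \<mu> a b c e = 0" if "b \<noteq> a" "b \<noteq> c" "a < dm" "b < dm" "c < dm" "e < dm" for a b c e
  proof -
    have "cnj (mom \<mu> b a e c) = (\<integral>v. cnj (v b * cnj (v a) * v e * cnj (v c)) \<partial>\<mu>)"
      unfolding mom_def by (rule Bochner_Integration.integral_cnj[symmetric])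
    also have "\<dots> = mom \<mu> a b c e"
      unfolding mom_def by (rule Bochner_Integration.integral_cong) (simp_all add: mult_ac)
    finally have "mom \<mu> a b c e = cnj (mom \<mu> b a e c)" by simp
    also have "mom \<mu> b a e c = 0" using mom_zero1[OF U, of b a e c] that by auto
    finally show ?thesis by simp
  qed
  consider "a \<noteq> b \<and> a \<noteq> e" | "c \<noteq> b \<and> c \<noteq> e" | "b \<noteq> a \<and> b \<noteq> c" | "e \<noteq> a \<and> e \<noteq> c"
    using False by blast
  then have "mom \<mu> a b c e = 0"
  proof cases
    case 1 then show ?thesis using mom_zero1[OF U abce] by auto
  next
    case 2 then show ?thesis
      using mom_zero1[OF U abce(3,2,1,4)] mom_comm1[of \<mu> a b c e] by auto
  next
    case 3 then show ?thesis using z2 abce by auto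
  next
    case 4 then show ?thesis using z2[of e a c b] abce mom_comm2[of \<mu> a b c e] by auto
  qed
  then show ?thesis by (simp only: if_not_P[OF False])
qed

definition tr :: "nat \<Rightarrow> nat \<Rightarrow> nat \<Rightarrow> nat" where
  "tr a b x = (if x = a then b else if x = b then a else x)"

lemma tr_lt: "a < dm \<Longrightarrow> b < dm \<Longrightarrow> x < dm \<Longrightarrow> tr a b x < dm"
  by (simp add: tr_def)

lemma tr_inv: "tr a b (tr a b x) = x" by (simp add: tr_def)

lemma tr_bij: "a < dm \<Longrightarrow> b < dm \<Longrightarrow> bij_betw (tr a b) {..<dm} {..<dm}"
  by (rule bij_betw_byWitness[where f' = "tr a b"]) (auto simp: tr_lt tr_inv)

lemma mom_perm:
  assumes U: "unitarily_invariant_state_measure dm \<mu>"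
    and ab: "a0 < dm" "b0 < dm"
    and abce: "a < dm" "b < dm" "c < dm" "e < dm"
  shows "mom \<mu> a b c e = mom \<mu> (tr a0 b0 a) (tr a0 b0 b) (tr a0 b0 c) (tr a0 b0 e)"
proof -
  define V where "V = (\<lambda>l k. if k = tr a0 b0 l then 1 else (0::complex))"
  have "unitary_mat dm V"
    unfolding unitary_mat_def
  proof (intro allI impI)
    fix j k assume jk: "j < dm" "k < dm"
    have "(\<Sum>l<dm. cnj (V l j) * V l k)
       = (\<Sum>l<dm. (\<lambda>m. (if j = m then 1 else 0) * (if k = m then 1 else (0::complex))) (tr a0 b0 l))"
      by (intro sum.cong refl) (simp add: V_def)
    also have "\<dots> = (\<Sum>m<dm. (if j = m then 1 else 0) * (if k = m then 1 else (0::complex)))"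
      by (rule sum.reindex_bij_betw[OF tr_bij[OF ab], where g = "\<lambda>m. (if j = m then 1 else 0) * (if k = m then 1 else (0::complex))"])
    also have "\<dots> = (if j = k then 1 else 0)" using jk by (simp add: sum_delta2)
    finally show "(\<Sum>l<dm. cnj (V l j) * V l k) = (if j = k then 1 else 0)" .
  qed
  moreover have "\<And>l k. l < dm \<Longrightarrow> V l k = (if k = tr a0 b0 l then (\<lambda>_. 1) l else 0)"
    by (simp add: V_def)
  moreover have "\<And>l. l < dm \<Longrightarrow> tr a0 b0 l < dm" using ab by (simp add: tr_lt)
  ultimately have "mom \<mu> a b c e = (\<lambda>_. 1) a * cnj ((\<lambda>_. 1) b) * (\<lambda>_. 1) c * cnj ((\<lambda>_. 1) e) *
     mom \<mu> (tr a0 b0 a) (tr a0 b0 b) (tr a0 b0 c) (tr a0 b0 e)"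
    by (rule mom_mono[OF U _ _ _ abce])
  then show ?thesis by simp
qed

definition qq :: "(nat \<Rightarrow> complex) measure \<Rightarrow> nat \<Rightarrow> nat \<Rightarrow> complex" where
  "qq \<mu> a c = mom \<mu> a a c c"

lemma mom_form':
  assumes U: "unitarily_invariant_state_measure dm \<mu>"
    and abce: "a < dm" "b < dm" "c < dm" "e < dm"
  shows "mom \<mu> a b c e = (if (a = b \<and> c = e) \<or> (a = e \<and> c = b) then qq \<mu> a c else 0)"
  using mom_form[OF U abce] by (simp add: qq_def)

lemma qq_sym: "qq \<mu> a c = qq \<mu> c a"
  unfolding qq_def mom_def by (simp add: mult_ac)

lemma qq_perm:
  assumes U: "unitarily_invariant_state_measure dm \<mu>"
    and ab: "a0 < dm" "b0 < dm" and ac: "a < dm" "c < dm"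
  shows "qq \<mu> a c = qq \<mu> (tr a0 b0 a) (tr a0 b0 c)"
  unfolding qq_def using mom_perm[OF U ab ac(1) ac(1) ac(2) ac(2)] .

lemma qq_diag:
  assumes U: "unitarily_invariant_state_measure dm \<mu>" and a: "a < dm"
  shows "qq \<mu> a a = qq \<mu> 0 0"
proof -
  have z: "0 < dm" using a by simp
  have "qq \<mu> a a = qq \<mu> (tr 0 a a) (tr 0 a a)" using qq_perm[OF U z a a a] .
  then show ?thesis by (simp add: tr_def)
qed

lemma qq_off:
  assumes U: "unitarily_invariant_state_measure dm \<mu>" and ac: "a < dm" "c < dm" "a \<noteq> c"
  shows "qq \<mu> a c = qq \<mu> 0 1"
proof -
  define g where "g = tr a 0 c"
  have g0: "g \<noteq> 0" using ac by (auto simp: g_def tr_def)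
  have gd: "g < dm" using ac by (simp add: g_def tr_lt)
  have d1: "1 < dm" using ac by auto
  have z: "0 < dm" using ac by simp
  have "qq \<mu> a c = qq \<mu> (tr a 0 a) (tr a 0 c)" using qq_perm[OF U ac(1) z ac(1,2)] .
  also have "\<dots> = qq \<mu> 0 g" by (simp add: tr_def g_def)
  also have "\<dots> = qq \<mu> (tr g 1 0) (tr g 1 g)" using qq_perm[OF U gd d1 z gd] .
  also have "\<dots> = qq \<mu> 0 1" using g0 by (simp add: tr_def)
  finally show ?thesis .
qed

lemma qq_norm:
  assumes U: "unitarily_invariant_state_measure dm \<mu>"
  shows "(\<Sum>a<dm. \<Sum>c<dm. qq \<mu> a c) = 1"
proof -
  interpret prob_space \<mu> using U unfolding unitarily_invariant_state_measure_def by auto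
  have int: "integrable \<mu> (\<lambda>v. \<Sum>a<dm. \<Sum>c<dm. v a * cnj (v a) * v c * cnj (v c))"
    by (simp add: mono_int[OF U])
  have "(\<Sum>a<dm. \<Sum>c<dm. qq \<mu> a c) = (\<integral>v. (\<Sum>a<dm. \<Sum>c<dm. v a * cnj (v a) * v c * cnj (v c)) \<partial>\<mu>)"
    by (simp add: qq_def mom_def integral_sum mono_int[OF U])
  also have "\<dots> = (\<integral>v. 1 \<partial>\<mu>)"
  proof (rule integral_cong_AE)
    show "(\<lambda>v. \<Sum>a<dm. \<Sum>c<dm. v a * cnj (v a) * v c * cnj (v c)) \<in> borel_measurable \<mu>"
      using int by (rule borel_measurable_integrable)
    show "(\<lambda>v. 1::complex) \<in> borel_measurable \<mu>" by simp
    show "AE v in \<mu>. (\<Sum>a<dm. \<Sum>c<dm. v a * cnj (v a) * v c * cnj (v c)) = 1"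
      using sphere_AE[OF U]
    proof eventually_elim
      case (elim v)
      have s: "(\<Sum>a<dm. v a * cnj (v a)) = 1"
      proof -
        have "(\<Sum>a<dm. v a * cnj (v a)) = complex_of_real (\<Sum>a<dm. (cmod (v a))\<^sup>2)"
          by (simp add: complex_mult_cnj cmod_power2)
        also have "\<dots> = 1" using elim unfolding unit_sphere_vec_def by simp
        finally show ?thesis .
      qed
      have "(\<Sum>a<dm. \<Sum>c<dm. v a * cnj (v a) * v c * cnj (v c)) = (\<Sum>a<dm. v a * cnj (v a)) * (\<Sum>c<dm. v c * cnj (v c))"
        by (simp add: sum_product mult.assoc)
      then show ?case using s by simp
    qed
  qed
  also have "\<dots> = 1" by (simp add: prob_space)
  finally show ?thesis .
qed

lemma sum_split2:
  fixes f :: "nat \<Rightarrow> complex" and dm :: nat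
  assumes "2 \<le> dm"
  shows "(\<Sum>l<dm. f l) = f 0 + f 1 + (\<Sum>l\<in>{2..<dm}. f l)"
proof -
  have "(\<Sum>l<dm. f l) = (\<Sum>l\<in>{0..<dm}. f l)" by (simp add: atLeast0LessThan)
  also have "\<dots> = f 0 + (\<Sum>l\<in>{Suc 0..<dm}. f l)" using assms by (subst sum.atLeast_Suc_lessThan) auto
  also have "(\<Sum>l\<in>{Suc 0..<dm}. f l) = f 1 + (\<Sum>l\<in>{Suc (Suc 0)..<dm}. f l)"
    using assms by (subst sum.atLeast_Suc_lessThan) auto
  finally show ?thesis by (simp add: numeral_2_eq_2 add.assoc)
qed

lemma qq_had:
  assumes U: "unitarily_invariant_state_measure dm \<mu>" and d2: "2 \<le> dm"
  shows "qq \<mu> 0 0 = 2 * qq \<mu> 0 1"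
proof -
  define s :: complex where "s = of_real (1 / sqrt 2)"
  have r: "(1 / sqrt 2) * (1 / sqrt 2) = (1/2::real)"
    by (simp add: divide_simps)
  have "s * s = of_real ((1 / sqrt 2) * (1 / sqrt 2))" unfolding s_def by (simp only: of_real_mult)
  then have ss: "s * s = 1/2" using r by simp
  have cs: "cnj s = s" by (simp add: s_def)
  define V :: "nat \<Rightarrow> nat \<Rightarrow> complex" where "V = (\<lambda>l k. if l < 2 \<and> k < 2 then (if l = 1 \<and> k = 1 then -s else s) else if l = k then 1 else 0)"
  have Vhi: "V l k = (if l = k then 1 else 0)" if "2 \<le> l" for l k using that by (simp add: V_def)
  have "unitary_mat dm V"
    unfolding unitary_mat_def
  proof (intro allI impI)
    fix j k assume jk: "j < dm" "k < dm"
    have rest: "(\<Sum>l\<in>{2..<dm}. cnj (V l j) * V l k) = (if j = k \<and> 2 \<le> j then 1 else 0)"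
    proof -
      have "(\<Sum>l\<in>{2..<dm}. cnj (V l j) * V l k) = (\<Sum>l\<in>{2..<dm}. (if j = l then 1 else 0) * (if k = l then 1 else (0::complex)))"
        by (intro sum.cong refl) (auto simp: Vhi)
      also have "\<dots> = (if j = k \<and> 2 \<le> j then 1 else 0)" using jk by (subst sum_delta2) auto
      finally show ?thesis .
    qed
    show "(\<Sum>l<dm. cnj (V l j) * V l k) = (if j = k then 1 else 0)"
      unfolding sum_split2[OF d2] rest
      by (cases "j = 0"; cases "j = 1"; cases "k = 0"; cases "k = 1") (auto simp: V_def cs ss)
  qed
  have z: "0 < dm" "1 < dm" using d2 by auto
  have V0: "V 0 x = (if x < 2 then s else 0)" for x by (simp add: V_def)
  have hs: "(\<Sum>x<dm. V 0 x * F x) = s * F 0 + s * F 1" for F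
    using d2 by (simp add: sum_split2 V0)
  have hs': "(\<Sum>x<dm. cnj (V 0 x) * F x) = s * F 0 + s * F 1" for F
    using d2 by (simp add: sum_split2 V0 cs)
  have "qq \<mu> 0 0 = (\<Sum>a'<dm. \<Sum>b'<dm. \<Sum>c'<dm. \<Sum>e'<dm.
     V 0 a' * cnj (V 0 b') * V 0 c' * cnj (V 0 e') * mom \<mu> a' b' c' e')"
    unfolding qq_def by (rule mom_inv[OF U \<open>unitary_mat dm V\<close> z(1) z(1) z(1) z(1)])
  also have "\<dots> = (\<Sum>a'<dm. V 0 a' * (\<Sum>b'<dm. cnj (V 0 b') * (\<Sum>c'<dm. V 0 c' *
      (\<Sum>e'<dm. cnj (V 0 e') * mom \<mu> a' b' c' e'))))"
    by (simp add: sum_distrib_left mult.assoc)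
  also have "\<dots> = s * (s * (s * (s * mom \<mu> 0 0 0 0 + s * mom \<mu> 0 0 0 1) + s * (s * mom \<mu> 0 0 1 0 + s * mom \<mu> 0 0 1 1)) +
         s * (s * (s * mom \<mu> 0 1 0 0 + s * mom \<mu> 0 1 0 1) + s * (s * mom \<mu> 0 1 1 0 + s * mom \<mu> 0 1 1 1))) +
    s * (s * (s * (s * mom \<mu> 1 0 0 0 + s * mom \<mu> 1 0 0 1) + s * (s * mom \<mu> 1 0 1 0 + s * mom \<mu> 1 0 1 1)) +
         s * (s * (s * mom \<mu> 1 1 0 0 + s * mom \<mu> 1 1 0 1) + s * (s * mom \<mu> 1 1 1 0 + s * mom \<mu> 1 1 1 1)))"
    by (simp only: hs hs')
  also have "\<dots> = (s * s) * (s * s) * (2 * qq \<mu> 0 0 + 4 * qq \<mu> 0 1)"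
    using z qq_diag[OF U z(2)] qq_off[OF U z(2) z(1)] by (simp add: mom_form'[OF U] algebra_simps)
  also have "\<dots> = qq \<mu> 0 1 + qq \<mu> 0 0 / 2" by (simp add: ss algebra_simps)
  finally have h: "qq \<mu> 0 0 = qq \<mu> 0 1 + qq \<mu> 0 0 / 2" .
  have h2: "qq \<mu> 0 0 - qq \<mu> 0 0 / 2 = qq \<mu> 0 1" using h by (metis add_diff_cancel_right')
  have "qq \<mu> 0 0 - qq \<mu> 0 0 / 2 = qq \<mu> 0 0 / 2" by simp
  with h2 have "qq \<mu> 0 0 / 2 = qq \<mu> 0 1" by simp
  then show ?thesis by (simp add: field_simps)
qed

lemma qq_formula:
  assumes U: "unitarily_invariant_state_measure dm \<mu>" and d1: "1 \<le> dm" and ac: "a < dm" "c < dm"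
  shows "qq \<mu> a c = (1 + of_bool (a = c)) / (of_nat dm * (of_nat dm + 1))"
proof (cases "dm = 1")
  case True
  then have "a = 0" "c = 0" using ac by auto
  moreover have "qq \<mu> 0 0 = 1" using qq_norm[OF U] True by simp
  ultimately show ?thesis using True by simp
next
  case False
  then have d2: "2 \<le> dm" using d1 by simp
  define q where "q = qq \<mu> 0 1"
  have gen: "qq \<mu> x y = q * (1 + of_bool (x = y))" if "x < dm" "y < dm" for x y
  proof (cases "x = y")
    case True
    then show ?thesis using qq_diag[OF U that(1)] qq_had[OF U d2] by (simp add: q_def)
  next
    case False
    then show ?thesis using qq_off[OF U that False] by (simp add: q_def)
  qed
  have row: "(\<Sum>y<dm. (1 + of_bool (x = y))) = of_nat dm + (1::complex)" if "x < dm" for x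
  proof -
    have "(\<Sum>y<dm. (1 + of_bool (x = y))) = (\<Sum>y<dm. 1) + (\<Sum>y<dm. if x = y then 1 else (0::complex))"
      by (simp add: sum.distrib of_bool_def)
    also have "\<dots> = of_nat dm + 1" using that by simp
    finally show ?thesis .
  qed
  have "1 = (\<Sum>x<dm. \<Sum>y<dm. qq \<mu> x y)" using qq_norm[OF U] by simp
  also have "\<dots> = (\<Sum>x<dm. q * (\<Sum>y<dm. (1 + of_bool (x = y))))"
    by (intro sum.cong refl) (simp add: gen sum_distrib_left)
  also have "\<dots> = (\<Sum>x<dm. q * (of_nat dm + 1))"
    by (intro sum.cong refl) (simp add: row)
  also have "\<dots> = q * (of_nat dm * (of_nat dm + 1))" by simp
  finally have h: "q * (of_nat dm * (of_nat dm + 1)) = 1" by simp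
  have a1: "(of_nat dm :: complex) \<noteq> 0" using d1 by simp
  have a2: "(of_nat dm + 1 :: complex) \<noteq> 0"
    by (metis of_nat_eq_0_iff of_nat_1 of_nat_add add_is_0 one_neq_zero)
  have nz: "(of_nat dm * (of_nat dm + 1) :: complex) \<noteq> 0" using a1 a2 by simp
  have "q = 1 / (of_nat dm * (of_nat dm + 1))"
    using h nz by (metis nonzero_eq_divide_eq)
  then show ?thesis using gen[OF ac] by simp
qed
lemma mom_formula:
  assumes U: "unitarily_invariant_state_measure dm \<mu>" and d1: "1 \<le> dm"
    and abce: "a < dm" "b < dm" "c < dm" "e < dm"
  shows "mom \<mu> a b c e = (of_bool (a = b \<and> c = e) + of_bool (a = e \<and> c = b)) / (of_nat dm * (of_nat dm + 1))"
proof -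
  have m: "mom \<mu> a b c e = (if (a = b \<and> c = e) \<or> (a = e \<and> c = b) then qq \<mu> a c else 0)"
    by (rule mom_form'[OF U abce])
  have q: "qq \<mu> a c = (1 + of_bool (a = c)) / (of_nat dm * (of_nat dm + 1))"
    by (rule qq_formula[OF U d1 abce(1) abce(3)])
  show ?thesis
  proof (cases "(a = b \<and> c = e) \<or> (a = e \<and> c = b)")
    case False
    then have f1: "\<not> (a = b \<and> c = e)" and f2: "\<not> (a = e \<and> c = b)" by blast+
    show ?thesis unfolding m if_not_P[OF False] of_bool_def if_not_P[OF f1] if_not_P[OF f2] by simp
  next
    case True
    note m' = m[unfolded if_P[OF True]]
    show ?thesis
    proof (cases "a = c")
      case ac: True
      then have t1: "a = b \<and> c = e" and t2: "a = e \<and> c = b" using True by blast+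
      show ?thesis unfolding m' q of_bool_def if_P[OF ac] if_P[OF t1] if_P[OF t2] by simp
    next
      case ac: False
      show ?thesis
      proof (cases "a = b \<and> c = e")
        case t1: True
        then have t2: "\<not> (a = e \<and> c = b)" using ac by blast
        show ?thesis unfolding m' q of_bool_def if_not_P[OF ac] if_P[OF t1] if_not_P[OF t2] by simp
      next
        case t1: False
        then have t2: "a = e \<and> c = b" using True by blast
        show ?thesis unfolding m' q of_bool_def if_not_P[OF ac] if_not_P[OF t1] if_P[OF t2] by simp
      qed
    qed
  qed
qed

lemma diag_le:
  fixes c :: "'b \<Rightarrow> 'b \<Rightarrow> 't \<Rightarrow> 't \<Rightarrow> real"
  assumes "finite B" "finite T" "\<And>b b' t t'. c b b' t t' \<ge> 0"
  shows "(\<Sum>b\<in>B. \<Sum>t\<in>T. c b b t t) \<le> (\<Sum>b\<in>B. \<Sum>b'\<in>B. \<Sum>t\<in>T. \<Sum>t'\<in>T. c b b' t t')"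
proof (rule sum_mono)
  fix b assume b: "b \<in> B"
  have "(\<Sum>t\<in>T. c b b t t) \<le> (\<Sum>t\<in>T. \<Sum>t'\<in>T. c b b t t')"
  proof (rule sum_mono)
    fix t assume "t \<in> T"
    then show "c b b t t \<le> (\<Sum>t'\<in>T. c b b t t')"
      using assms by (intro member_le_sum) auto
  qed
  also have "\<dots> \<le> (\<Sum>b'\<in>B. \<Sum>t\<in>T. \<Sum>t'\<in>T. c b b' t t')"
    using b assms by (intro member_le_sum[where f = "\<lambda>b'. \<Sum>t\<in>T. \<Sum>t'\<in>T. c b b' t t'"] sum_nonneg) auto
  finally show "(\<Sum>t\<in>T. c b b t t) \<le> (\<Sum>b'\<in>B. \<Sum>t\<in>T. \<Sum>t'\<in>T. c b b' t t')" .
qed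

lemma GL:
  fixes f :: "'a \<Rightarrow> 's \<Rightarrow> 'b \<Rightarrow> 't \<Rightarrow> complex"
  assumes fin: "finite A" "finite S" "finite B" "finite T"
  shows "(\<Sum>b\<in>B. \<Sum>t\<in>T. \<Sum>a\<in>A. \<Sum>s\<in>S. (cmod (f a s b t))\<^sup>2)\<^sup>2 / (card B * card T) \<le>
    Re (\<Sum>b\<in>B. \<Sum>b'\<in>B. \<Sum>t1\<in>T. \<Sum>t3\<in>T. \<Sum>a\<in>A. \<Sum>a'\<in>A. \<Sum>s1\<in>S. \<Sum>s3\<in>S.
      f a s1 b t1 * cnj (f a s1 b' t3) * f a' s3 b' t3 * cnj (f a' s3 b t1))"
proof -
  define \<rho> where "\<rho> b t b' t' = (\<Sum>a\<in>A. \<Sum>s\<in>S. f a s b t * cnj (f a s b' t'))" for b t b' t'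
  define r where "r b t = (\<Sum>a\<in>A. \<Sum>s\<in>S. (cmod (f a s b t))\<^sup>2)" for b t
  have e1: "\<rho> b t1 b' t3 * cnj (\<rho> b t1 b' t3) = (\<Sum>a\<in>A. \<Sum>a'\<in>A. \<Sum>s1\<in>S. \<Sum>s3\<in>S.
      f a s1 b t1 * cnj (f a s1 b' t3) * f a' s3 b' t3 * cnj (f a' s3 b t1))" for b t1 b' t3
    unfolding \<rho>_def cnj_sum complex_cnj_mult complex_cnj_cnj sum_product by (simp add: mult_ac)
  have e2: "z * cnj z = complex_of_real ((cmod z)\<^sup>2)" for z
    by (simp add: complex_mult_cnj cmod_power2)
  have "Re (\<Sum>b\<in>B. \<Sum>b'\<in>B. \<Sum>t1\<in>T. \<Sum>t3\<in>T. \<Sum>a\<in>A. \<Sum>a'\<in>A. \<Sum>s1\<in>S. \<Sum>s3\<in>S.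
      f a s1 b t1 * cnj (f a s1 b' t3) * f a' s3 b' t3 * cnj (f a' s3 b t1))
    = (\<Sum>b\<in>B. \<Sum>b'\<in>B. \<Sum>t1\<in>T. \<Sum>t3\<in>T. (cmod (\<rho> b t1 b' t3))\<^sup>2)"
    by (simp add: e1[symmetric] e2 Re_sum)
  also have "\<dots> \<ge> (\<Sum>b\<in>B. \<Sum>t\<in>T. (cmod (\<rho> b t b t))\<^sup>2)"
    by (rule diag_le[OF fin(3,4)]) simp
  moreover have "\<rho> b t b t = complex_of_real (r b t)" for b t
    by (simp add: \<rho>_def r_def e2)
  moreover have r0: "r b t \<ge> 0" for b t unfolding r_def by (intro sum_nonneg) auto
  ultimately have ge: "(\<Sum>b\<in>B. \<Sum>t\<in>T. (r b t)\<^sup>2) \<le> Re (\<Sum>b\<in>B. \<Sum>b'\<in>B. \<Sum>t1\<in>T. \<Sum>t3\<in>T. \<Sum>a\<in>A. \<Sum>a'\<in>A. \<Sum>s1\<in>S. \<Sum>s3\<in>S.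
      f a s1 b t1 * cnj (f a s1 b' t3) * f a' s3 b' t3 * cnj (f a' s3 b t1))"
    by simp
  have cs: "(\<Sum>b\<in>B. \<Sum>t\<in>T. r b t)\<^sup>2 \<le> (\<Sum>b\<in>B. \<Sum>t\<in>T. (r b t)\<^sup>2) * (card B * card T)"
  proof -
    have 1: "(\<Sum>b\<in>B. \<Sum>t\<in>T. r b t) = (\<Sum>z\<in>B \<times> T. r (fst z) (snd z))"
      by (simp add: sum.cartesian_product split_def)
    have 2: "(\<Sum>b\<in>B. \<Sum>t\<in>T. (r b t)\<^sup>2) = (\<Sum>z\<in>B \<times> T. (r (fst z) (snd z))\<^sup>2)"
      by (simp add: sum.cartesian_product split_def)
    show ?thesis unfolding 1 2
      using sum_squared_le_sum_of_squares[of "\<lambda>z. r (fst z) (snd z)" "B \<times> T"]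
      by (simp add: card_cartesian_product)
  qed
  have "(\<Sum>b\<in>B. \<Sum>t\<in>T. r b t)\<^sup>2 / (card B * card T) \<le> (\<Sum>b\<in>B. \<Sum>t\<in>T. (r b t)\<^sup>2)"
  proof (cases "card B * card T = 0")
    case True
    then have z: "real (card B) * real (card T) = 0" by simp
    have "0 \<le> (\<Sum>b\<in>B. \<Sum>t\<in>T. (r b t)\<^sup>2)" by (intro sum_nonneg) auto
    then show ?thesis by (simp add: z)
  next
    case False then show ?thesis using cs by (simp add: divide_le_eq)
  qed
  with ge show ?thesis unfolding r_def by linarith
qed

lemma GL2:
  fixes f :: "'a \<Rightarrow> 's \<Rightarrow> 'b \<Rightarrow> 't \<Rightarrow> complex"
  assumes fin: "finite A" "finite S" "finite B" "finite T"
  shows "(\<Sum>b\<in>B. \<Sum>t\<in>T. \<Sum>a\<in>A. \<Sum>s\<in>S. (cmod (f a s b t))\<^sup>2)\<^sup>2 / (card A * card S) \<le>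
    Re (\<Sum>b\<in>B. \<Sum>b'\<in>B. \<Sum>t1\<in>T. \<Sum>t3\<in>T. \<Sum>a\<in>A. \<Sum>a'\<in>A. \<Sum>s1\<in>S. \<Sum>s3\<in>S.
      f a s1 b t1 * cnj (f a s1 b' t3) * f a' s3 b' t3 * cnj (f a' s3 b t1))"
proof -
  have G: "(\<Sum>a\<in>A. \<Sum>s\<in>S. \<Sum>b\<in>B. \<Sum>t\<in>T. (cmod (cnj (f a s b t)))\<^sup>2)\<^sup>2 / (card A * card S) \<le>
    Re (\<Sum>a\<in>A. \<Sum>a'\<in>A. \<Sum>s1\<in>S. \<Sum>s3\<in>S. \<Sum>b\<in>B. \<Sum>b'\<in>B. \<Sum>t1\<in>T. \<Sum>t3\<in>T.
      cnj (f a s1 b t1) * cnj (cnj (f a' s3 b t1)) * cnj (f a' s3 b' t3) * cnj (cnj (f a s1 b' t3)))"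
    by (rule GL[OF fin(3,4,1,2), where f = "\<lambda>b t a s. cnj (f a s b t)"])
  have N: "(\<Sum>a\<in>A. \<Sum>s\<in>S. \<Sum>b\<in>B. \<Sum>t\<in>T. (cmod (cnj (f a s b t)))\<^sup>2) =
           (\<Sum>b\<in>B. \<Sum>t\<in>T. \<Sum>a\<in>A. \<Sum>s\<in>S. (cmod (f a s b t))\<^sup>2)"
    by (simp only: complex_mod_cnj sum.swap[of _ A B] sum.swap[of _ A T] sum.swap[of _ S B] sum.swap[of _ S T])
  have R: "Re (\<Sum>a\<in>A. \<Sum>a'\<in>A. \<Sum>s1\<in>S. \<Sum>s3\<in>S. \<Sum>b\<in>B. \<Sum>b'\<in>B. \<Sum>t1\<in>T. \<Sum>t3\<in>T.
      cnj (f a s1 b t1) * cnj (cnj (f a' s3 b t1)) * cnj (f a' s3 b' t3) * cnj (cnj (f a s1 b' t3)))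
    = Re (cnj (\<Sum>a\<in>A. \<Sum>a'\<in>A. \<Sum>s1\<in>S. \<Sum>s3\<in>S. \<Sum>b\<in>B. \<Sum>b'\<in>B. \<Sum>t1\<in>T. \<Sum>t3\<in>T.
      f a s1 b t1 * cnj (f a s1 b' t3) * f a' s3 b' t3 * cnj (f a' s3 b t1)))"
    by (simp add: mult_ac)
  also have "\<dots> = Re (\<Sum>a\<in>A. \<Sum>a'\<in>A. \<Sum>s1\<in>S. \<Sum>s3\<in>S. \<Sum>b\<in>B. \<Sum>b'\<in>B. \<Sum>t1\<in>T. \<Sum>t3\<in>T.
      f a s1 b t1 * cnj (f a s1 b' t3) * f a' s3 b' t3 * cnj (f a' s3 b t1))"
    by (simp only: cnj.simps(1))
  also have "\<dots> = Re (\<Sum>b\<in>B. \<Sum>b'\<in>B. \<Sum>t1\<in>T. \<Sum>t3\<in>T. \<Sum>a\<in>A. \<Sum>a'\<in>A. \<Sum>s1\<in>S. \<Sum>s3\<in>S.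
      f a s1 b t1 * cnj (f a s1 b' t3) * f a' s3 b' t3 * cnj (f a' s3 b t1))"
    by (simp only: sum.swap[of _ A B] sum.swap[of _ A T] sum.swap[of _ S B] sum.swap[of _ S T])
  finally show ?thesis using G N by simp
qed

lemma GLmin:
  fixes f :: "'a \<Rightarrow> 's \<Rightarrow> 'b \<Rightarrow> 't \<Rightarrow> complex"
  assumes fin: "finite A" "finite S" "finite B" "finite T"
  shows "(\<Sum>b\<in>B. \<Sum>t\<in>T. \<Sum>a\<in>A. \<Sum>s\<in>S. (cmod (f a s b t))\<^sup>2)\<^sup>2 / min (card A * card S) (card B * card T) \<le>
    Re (\<Sum>b\<in>B. \<Sum>b'\<in>B. \<Sum>t1\<in>T. \<Sum>t3\<in>T. \<Sum>a\<in>A. \<Sum>a'\<in>A. \<Sum>s1\<in>S. \<Sum>s3\<in>S.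
      f a s1 b t1 * cnj (f a s1 b' t3) * f a' s3 b' t3 * cnj (f a' s3 b t1))"
proof (cases "card A * card S \<le> card B * card T")
  case True
  then have "min (card A * card S) (card B * card T) = card A * card S" by simp
  then show ?thesis using GL2[OF fin, of f] by simp
next
  case False
  then have "min (card A * card S) (card B * card T) = card B * card T" by simp
  then show ?thesis using GL[OF fin, of f] by simp
qed

definition Bs :: "(nat \<Rightarrow> nat) \<Rightarrow> nat set \<Rightarrow> (nat \<Rightarrow> nat) set" where
  "Bs d S = PiE S (\<lambda>i. {..<d i})"

lemma Bs_finite[simp]: "finite S \<Longrightarrow> finite (Bs d S)"
  by (simp add: Bs_def finite_PiE)

lemma card_Bs: "finite S \<Longrightarrow> card (Bs d S) = (\<Prod>i\<in>S. d i)"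
  by (simp add: Bs_def card_PiE)

lemma basis_Bs: "basis_idx d n = Bs d {..<n}"
  by (simp add: basis_idx_def Bs_def)

lemma Bs_arb: "k \<in> Bs d S \<Longrightarrow> i \<notin> S \<Longrightarrow> k i = undefined"
  unfolding Bs_def by (rule PiE_arb)

lemma Bs_lt: "k \<in> Bs d S \<Longrightarrow> i \<in> S \<Longrightarrow> k i < d i"
  unfolding Bs_def by auto

lemma merge_in:
  assumes "s \<in> Bs d x" "t \<in> Bs d (I - x)" "x \<subseteq> I"
  shows "merge_idx x s t \<in> Bs d I"
  using assms unfolding Bs_def merge_idx_def by (auto simp: PiE_iff extensional_def)

lemma restrict_in: "k \<in> Bs d I \<Longrightarrow> J \<subseteq> I \<Longrightarrow> restrict k J \<in> Bs d J"
  unfolding Bs_def by (auto simp: PiE_iff)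

lemma merge_restrict:
  assumes "k \<in> Bs d I" "x \<subseteq> I"
  shows "merge_idx x (restrict k x) (restrict k (I - x)) = k"
  using assms by (auto simp: merge_idx_def fun_eq_iff Bs_arb)

lemma restrict_merge1:
  assumes "s \<in> Bs d x" shows "restrict (merge_idx x s t) x = s"
  using assms by (auto simp: merge_idx_def fun_eq_iff Bs_arb)

lemma restrict_merge2:
  assumes "t \<in> Bs d (I - x)" "x \<subseteq> I" shows "restrict (merge_idx x s t) (I - x) = t"
  using assms by (auto simp: merge_idx_def fun_eq_iff Bs_arb)

lemma split_sum:
  assumes I: "finite I" and x: "x \<subseteq> I"
  shows "(\<Sum>k\<in>Bs d I. g k) = (\<Sum>s\<in>Bs d x. \<Sum>t\<in>Bs d (I - x). g (merge_idx x s t))"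
proof -
  have fx: "finite x" using I x by (rule finite_subset[rotated])
  have "(\<Sum>s\<in>Bs d x. \<Sum>t\<in>Bs d (I - x). g (merge_idx x s t)) =
        (\<Sum>z\<in>Bs d x \<times> Bs d (I - x). g (merge_idx x (fst z) (snd z)))"
    by (simp add: sum.cartesian_product split_def)
  also have "\<dots> = (\<Sum>k\<in>Bs d I. g k)"
  proof (rule sum.reindex_bij_betw[where h = "\<lambda>z. merge_idx x (fst z) (snd z)"])
    show "bij_betw (\<lambda>z. merge_idx x (fst z) (snd z)) (Bs d x \<times> Bs d (I - x)) (Bs d I)"
      by (rule bij_betw_byWitness[where f' = "\<lambda>k. (restrict k x, restrict k (I - x))"])
         (auto simp: merge_restrict restrict_merge1 restrict_merge2 merge_in x restrict_in)
  qed
  finally show ?thesis by simp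
qed

lemma merge_merge: "merge_idx x (merge_idx x s1 t1) (merge_idx x s3 t3) = merge_idx x s1 t3"
  by (simp add: merge_idx_def fun_eq_iff)

lemma prod_of_bool:
  assumes "finite S"
  shows "(\<Prod>i\<in>S. (of_bool (P i) :: complex)) = of_bool (\<forall>i\<in>S. P i)"
  using assms by (induction S rule: finite_induct) auto

lemma collapse:
  fixes c :: "'k \<Rightarrow> 'k \<Rightarrow> 'k \<Rightarrow> 'k \<Rightarrow> complex"
  assumes B: "finite B" and X: "finite X"
    and m: "\<And>x k1 k3. x \<in> X \<Longrightarrow> k1 \<in> B \<Longrightarrow> k3 \<in> B \<Longrightarrow> m1 x k1 k3 \<in> B \<and> m2 x k1 k3 \<in> B"
  shows "(\<Sum>k1\<in>B. \<Sum>k2\<in>B. \<Sum>k3\<in>B. \<Sum>k4\<in>B. c k1 k2 k3 k4 *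
            (\<Sum>x\<in>X. if k2 = m1 x k1 k3 \<and> k4 = m2 x k1 k3 then 1 else 0))
       = (\<Sum>x\<in>X. \<Sum>k1\<in>B. \<Sum>k3\<in>B. c k1 (m1 x k1 k3) k3 (m2 x k1 k3))"
proof -
  have "(\<Sum>k1\<in>B. \<Sum>k2\<in>B. \<Sum>k3\<in>B. \<Sum>k4\<in>B. c k1 k2 k3 k4 *
            (\<Sum>x\<in>X. if k2 = m1 x k1 k3 \<and> k4 = m2 x k1 k3 then 1 else 0))
      = (\<Sum>k1\<in>B. \<Sum>k2\<in>B. \<Sum>k3\<in>B. \<Sum>k4\<in>B. \<Sum>x\<in>X.
            if k2 = m1 x k1 k3 \<and> k4 = m2 x k1 k3 then c k1 k2 k3 k4 else 0)"
    by (simp add: sum_distrib_left if_distrib cong: if_cong)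
  also have "\<dots> = (\<Sum>x\<in>X. \<Sum>k1\<in>B. \<Sum>k2\<in>B. \<Sum>k3\<in>B. \<Sum>k4\<in>B.
            if k2 = m1 x k1 k3 \<and> k4 = m2 x k1 k3 then c k1 k2 k3 k4 else 0)"
    by (simp only: sum.swap[of _ B X])
  also have "\<dots> = (\<Sum>x\<in>X. \<Sum>k1\<in>B. \<Sum>k2\<in>B. \<Sum>k3\<in>B.
            if k2 = m1 x k1 k3 then c k1 k2 k3 (m2 x k1 k3) else 0)"
  proof (intro sum.cong refl)
    fix x k1 k2 k3 assume h: "x \<in> X" "k1 \<in> B" "k2 \<in> B" "k3 \<in> B"
    have "(\<Sum>k4\<in>B. if k2 = m1 x k1 k3 \<and> k4 = m2 x k1 k3 then c k1 k2 k3 k4 else 0)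
        = (\<Sum>k4\<in>B. if k4 = m2 x k1 k3 then (if k2 = m1 x k1 k3 then c k1 k2 k3 k4 else 0) else 0)"
      by (intro sum.cong refl) auto
    also have "\<dots> = (if k2 = m1 x k1 k3 then c k1 k2 k3 (m2 x k1 k3) else 0)"
      using m[OF h(1,2,4)] B by (subst sum.delta) auto
    finally show "(\<Sum>k4\<in>B. if k2 = m1 x k1 k3 \<and> k4 = m2 x k1 k3 then c k1 k2 k3 k4 else 0)
        = (if k2 = m1 x k1 k3 then c k1 k2 k3 (m2 x k1 k3) else 0)" .
  qed
  also have "\<dots> = (\<Sum>x\<in>X. \<Sum>k1\<in>B. \<Sum>k3\<in>B. \<Sum>k2\<in>B.
            if k2 = m1 x k1 k3 then c k1 k2 k3 (m2 x k1 k3) else 0)"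
    by (rule sum.cong[OF refl], rule sum.cong[OF refl], rule sum.swap)
  also have "\<dots> = (\<Sum>x\<in>X. \<Sum>k1\<in>B. \<Sum>k3\<in>B. c k1 (m1 x k1 k3) k3 (m2 x k1 k3))"
  proof (intro sum.cong refl)
    fix x k1 k3 assume h: "x \<in> X" "k1 \<in> B" "k3 \<in> B"
    show "(\<Sum>k2\<in>B. if k2 = m1 x k1 k3 then c k1 k2 k3 (m2 x k1 k3) else 0) = c k1 (m1 x k1 k3) k3 (m2 x k1 k3)"
      using m[OF h] B by (subst sum.delta) auto
  qed
  finally show ?thesis .
qed

lemma prod_meas:
  fixes M :: "nat \<Rightarrow> (nat \<Rightarrow> complex) measure" and g :: "nat \<Rightarrow> (nat \<Rightarrow> complex) \<Rightarrow> complex"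
  assumes P: "\<And>i. i < n \<Longrightarrow> prob_space (M i)"
    and int: "\<And>i. i < n \<Longrightarrow> integrable (M i) (g i)"
  shows "integrable (PiM {..<n} M) (\<lambda>\<omega>. \<Prod>i<n. g i (\<omega> i))"
    and "(\<integral>\<omega>. (\<Prod>i<n. g i (\<omega> i)) \<partial>PiM {..<n} M) = (\<Prod>i<n. integral\<^sup>L (M i) (g i))"
proof -
  define M' where "M' i = (if i < n then M i else count_space {undefined})" for i
  have eq: "PiM {..<n} M = PiM {..<n} M'" by (rule PiM_cong) (auto simp: M'_def)
  have sf: "sigma_finite_measure (M' i)" for i
    by (cases "i < n") (auto simp: M'_def P prob_space_imp_sigma_finite sigma_finite_measure_count_space_finite)
  have "product_sigma_finite M'" unfolding product_sigma_finite_def using sf by blast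
  then interpret product_sigma_finite M' .
  have int': "\<And>i. i \<in> {..<n} \<Longrightarrow> integrable (M' i) (g i)" using int by (simp add: M'_def)
  show "integrable (PiM {..<n} M) (\<lambda>\<omega>. \<Prod>i<n. g i (\<omega> i))"
    unfolding eq by (rule product_integrable_prod[OF _ int']) simp
  have "(\<integral>\<omega>. (\<Prod>i<n. g i (\<omega> i)) \<partial>PiM {..<n} M') = (\<Prod>i<n. integral\<^sup>L (M' i) (g i))"
    by (rule product_integral_prod[OF _ int']) simp
  also have "\<dots> = (\<Prod>i<n. integral\<^sup>L (M i) (g i))" by (simp add: M'_def)
  finally show "(\<integral>\<omega>. (\<Prod>i<n. g i (\<omega> i)) \<partial>PiM {..<n} M) = (\<Prod>i<n. integral\<^sup>L (M i) (g i))"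
    unfolding eq .
qed

lemma merge_in2:
  assumes "k1 \<in> Bs d I" "k3 \<in> Bs d I" "x \<subseteq> I"
  shows "merge_idx x k1 k3 \<in> Bs d I"
  using assms unfolding Bs_def merge_idx_def by (auto simp: PiE_iff extensional_def)

lemma cond_iff:
  assumes k: "k1 \<in> Bs d I" "k2 \<in> Bs d I" "k3 \<in> Bs d I" "k4 \<in> Bs d I" and x: "x \<subseteq> I"
  shows "((\<forall>i\<in>x. k1 i = k2 i \<and> k3 i = k4 i) \<and> (\<forall>i\<in>I - x. k1 i = k4 i \<and> k3 i = k2 i))
     \<longleftrightarrow> (k2 = merge_idx x k1 k3 \<and> k4 = merge_idx x k3 k1)"
proof
  assume h: "(\<forall>i\<in>x. k1 i = k2 i \<and> k3 i = k4 i) \<and> (\<forall>i\<in>I - x. k1 i = k4 i \<and> k3 i = k2 i)"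
  show "k2 = merge_idx x k1 k3 \<and> k4 = merge_idx x k3 k1"
  proof (intro conjI ext)
    fix i show "k2 i = merge_idx x k1 k3 i"
      using h k x Bs_arb[OF k(2), of i] Bs_arb[OF k(3), of i] by (cases "i \<in> I") (auto simp: merge_idx_def)
  next
    fix i show "k4 i = merge_idx x k3 k1 i"
      using h k x Bs_arb[OF k(4), of i] Bs_arb[OF k(1), of i] by (cases "i \<in> I") (auto simp: merge_idx_def)
  qed
next
  assume "k2 = merge_idx x k1 k3 \<and> k4 = merge_idx x k3 k1"
  then show "(\<forall>i\<in>x. k1 i = k2 i \<and> k3 i = k4 i) \<and> (\<forall>i\<in>I - x. k1 i = k4 i \<and> k3 i = k2 i)"
    by (auto simp: merge_idx_def)
qed

lemma momprod:
  fixes M :: "nat \<Rightarrow> (nat \<Rightarrow> complex) measure"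
  assumes d1: "\<And>i. i < n \<Longrightarrow> 1 \<le> d i"
    and UI: "\<And>i. i < n \<Longrightarrow> unitarily_invariant_state_measure (d i) (M i)"
    and k: "k1 \<in> Bs d {..<n}" "k2 \<in> Bs d {..<n}" "k3 \<in> Bs d {..<n}" "k4 \<in> Bs d {..<n}"
  shows "(\<Prod>i<n. mom (M i) (k1 i) (k2 i) (k3 i) (k4 i)) =
    (\<Prod>i<n. 1 / (of_nat (d i) * (of_nat (d i) + 1))) *
    (\<Sum>x\<in>Pow {..<n}. if k2 = merge_idx x k1 k3 \<and> k4 = merge_idx x k3 k1 then 1 else 0)"
proof -
  define A where "A i = (of_bool (k1 i = k2 i \<and> k3 i = k4 i) :: complex)" for i
  define B where "B i = (of_bool (k1 i = k4 i \<and> k3 i = k2 i) :: complex)" for i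
  have "(\<Prod>i<n. mom (M i) (k1 i) (k2 i) (k3 i) (k4 i)) =
        (\<Prod>i<n. 1 / (of_nat (d i) * (of_nat (d i) + 1)) * (A i + B i))"
  proof (rule prod.cong[OF refl])
    fix i assume i: "i \<in> {..<n}"
    then have lt: "k1 i < d i" "k2 i < d i" "k3 i < d i" "k4 i < d i" using k by (auto intro: Bs_lt)
    show "mom (M i) (k1 i) (k2 i) (k3 i) (k4 i) = 1 / (of_nat (d i) * (of_nat (d i) + 1)) * (A i + B i)"
      using mom_formula[OF UI d1 lt] i by (simp add: A_def B_def)
  qed
  also have "\<dots> = (\<Prod>i<n. 1 / (of_nat (d i) * (of_nat (d i) + 1))) * (\<Prod>i<n. A i + B i)"
    by (rule prod.distrib)
  also have "(\<Prod>i<n. A i + B i) = (\<Sum>x\<in>Pow {..<n}. (\<Prod>i\<in>x. A i) * (\<Prod>i\<in>{..<n} - x. B i))"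
    by (rule prod_add) simp
  also have "\<dots> = (\<Sum>x\<in>Pow {..<n}. if k2 = merge_idx x k1 k3 \<and> k4 = merge_idx x k3 k1 then 1 else 0)"
  proof (rule sum.cong[OF refl])
    fix x assume x: "x \<in> Pow {..<n}"
    have fx: "finite x" using x by (auto intro: finite_subset)
    have "(\<Prod>i\<in>x. A i) * (\<Prod>i\<in>{..<n} - x. B i) =
       of_bool ((\<forall>i\<in>x. k1 i = k2 i \<and> k3 i = k4 i) \<and> (\<forall>i\<in>{..<n} - x. k1 i = k4 i \<and> k3 i = k2 i))"
      unfolding A_def B_def prod_of_bool[OF fx] prod_of_bool[of "{..<n} - x"] by simp
    also have "\<dots> = of_bool (k2 = merge_idx x k1 k3 \<and> k4 = merge_idx x k3 k1)"
      using cond_iff[OF k, of x] x by simp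
    finally show "(\<Prod>i\<in>x. A i) * (\<Prod>i\<in>{..<n} - x. B i) =
       (if k2 = merge_idx x k1 k3 \<and> k4 = merge_idx x k3 k1 then 1 else 0)" by simp
  qed
  finally show ?thesis .
qed

definition mono4 :: "nat \<Rightarrow> (nat \<Rightarrow> nat) \<Rightarrow> (nat \<Rightarrow> nat) \<Rightarrow> (nat \<Rightarrow> nat) \<Rightarrow> (nat \<Rightarrow> nat)
    \<Rightarrow> (nat \<Rightarrow> nat \<Rightarrow> complex) \<Rightarrow> complex" where
  "mono4 n k1 k2 k3 k4 \<omega> = (\<Prod>i<n. \<omega> i (k1 i) * cnj (\<omega> i (k2 i)) * \<omega> i (k3 i) * cnj (\<omega> i (k4 i)))"

lemma psi4_expand:
  "apply_op d n U (sep_state n \<omega>) j1 * cnj (apply_op d n U (sep_state n \<omega>) j2) *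
   apply_op d n U (sep_state n \<omega>) j3 * cnj (apply_op d n U (sep_state n \<omega>) j4) =
   (\<Sum>k1\<in>Bs d {..<n}. \<Sum>k2\<in>Bs d {..<n}. \<Sum>k3\<in>Bs d {..<n}. \<Sum>k4\<in>Bs d {..<n}.
      (U j1 k1 * cnj (U j2 k2) * U j3 k3 * cnj (U j4 k4)) * mono4 n k1 k2 k3 k4 \<omega>)"
  unfolding apply_op_def sep_state_def mono4_def basis_Bs cnj_sum sum4
  by (simp add: prod.distrib mult_ac)

lemma mono4_int:
  fixes M :: "nat \<Rightarrow> (nat \<Rightarrow> complex) measure"
  assumes d1: "\<And>i. i < n \<Longrightarrow> 1 \<le> d i"
    and UI: "\<And>i. i < n \<Longrightarrow> unitarily_invariant_state_measure (d i) (M i)"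
    and k: "k1 \<in> Bs d {..<n}" "k2 \<in> Bs d {..<n}" "k3 \<in> Bs d {..<n}" "k4 \<in> Bs d {..<n}"
  shows "integrable (PiM {..<n} M) (mono4 n k1 k2 k3 k4)"
    and "(\<integral>\<omega>. mono4 n k1 k2 k3 k4 \<omega> \<partial>PiM {..<n} M) =
    (\<Prod>i<n. 1 / (of_nat (d i) * (of_nat (d i) + 1))) *
    (\<Sum>x\<in>Pow {..<n}. if k2 = merge_idx x k1 k3 \<and> k4 = merge_idx x k3 k1 then 1 else 0)"
proof -
  have P: "\<And>i. i < n \<Longrightarrow> prob_space (M i)"
    using UI unfolding unitarily_invariant_state_measure_def by auto
  have int: "\<And>i. i < n \<Longrightarrow> integrable (M i) (\<lambda>v. v (k1 i) * cnj (v (k2 i)) * v (k3 i) * cnj (v (k4 i)))"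
    using UI mono_int by blast
  show "integrable (PiM {..<n} M) (mono4 n k1 k2 k3 k4)"
    unfolding mono4_def[abs_def] using prod_meas(1)[OF P int] by simp
  have "(\<integral>\<omega>. mono4 n k1 k2 k3 k4 \<omega> \<partial>PiM {..<n} M) = (\<Prod>i<n. mom (M i) (k1 i) (k2 i) (k3 i) (k4 i))"
    unfolding mono4_def mom_def using prod_meas(2)[OF P int] by simp
  also have "\<dots> = (\<Prod>i<n. 1 / (of_nat (d i) * (of_nat (d i) + 1))) *
    (\<Sum>x\<in>Pow {..<n}. if k2 = merge_idx x k1 k3 \<and> k4 = merge_idx x k3 k1 then 1 else 0)"
    by (rule momprod[OF d1 UI k])
  finally show "(\<integral>\<omega>. mono4 n k1 k2 k3 k4 \<omega> \<partial>PiM {..<n} M) =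
    (\<Prod>i<n. 1 / (of_nat (d i) * (of_nat (d i) + 1))) *
    (\<Sum>x\<in>Pow {..<n}. if k2 = merge_idx x k1 k3 \<and> k4 = merge_idx x k3 k1 then 1 else 0)" .
qed

lemma E4:
  fixes M :: "nat \<Rightarrow> (nat \<Rightarrow> complex) measure"
  assumes d1: "\<And>i. i < n \<Longrightarrow> 1 \<le> d i"
    and UI: "\<And>i. i < n \<Longrightarrow> unitarily_invariant_state_measure (d i) (M i)"
  shows "integrable (PiM {..<n} M) (\<lambda>\<omega>. apply_op d n U (sep_state n \<omega>) j1 * cnj (apply_op d n U (sep_state n \<omega>) j2) *
   apply_op d n U (sep_state n \<omega>) j3 * cnj (apply_op d n U (sep_state n \<omega>) j4))" (is ?I)
    and "(\<integral>\<omega>. apply_op d n U (sep_state n \<omega>) j1 * cnj (apply_op d n U (sep_state n \<omega>) j2) *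
   apply_op d n U (sep_state n \<omega>) j3 * cnj (apply_op d n U (sep_state n \<omega>) j4) \<partial>PiM {..<n} M) =
    (\<Prod>i<n. 1 / (of_nat (d i) * (of_nat (d i) + 1))) *
    (\<Sum>x\<in>Pow {..<n}. \<Sum>k1\<in>Bs d {..<n}. \<Sum>k3\<in>Bs d {..<n}.
        U j1 k1 * cnj (U j2 (merge_idx x k1 k3)) * U j3 k3 * cnj (U j4 (merge_idx x k3 k1)))" (is ?E)
proof -
  let ?B = "Bs d {..<n}"
  let ?C = "(\<Prod>i<n. 1 / (of_nat (d i) * (of_nat (d i) + 1))) :: complex"
  have mi1: "integrable (PiM {..<n} M) (mono4 n k1 k2 k3 k4)"
    if "k1 \<in> ?B" "k2 \<in> ?B" "k3 \<in> ?B" "k4 \<in> ?B" for k1 k2 k3 k4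
    by (rule mono4_int(1)) (use d1 UI that in auto)
  have mi2: "(\<integral>\<omega>. mono4 n k1 k2 k3 k4 \<omega> \<partial>PiM {..<n} M) = ?C *
    (\<Sum>x\<in>Pow {..<n}. if k2 = merge_idx x k1 k3 \<and> k4 = merge_idx x k3 k1 then 1 else 0)"
    if "k1 \<in> ?B" "k2 \<in> ?B" "k3 \<in> ?B" "k4 \<in> ?B" for k1 k2 k3 k4
    by (rule mono4_int(2)) (use d1 UI that in auto)
  have intK: "integrable (PiM {..<n} M) (\<lambda>\<omega>. (U j1 k1 * cnj (U j2 k2) * U j3 k3 * cnj (U j4 k4)) * mono4 n k1 k2 k3 k4 \<omega>)"
    if "k1 \<in> ?B" "k2 \<in> ?B" "k3 \<in> ?B" "k4 \<in> ?B" for k1 k2 k3 k4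
    using mi1[OF that] by simp
  show ?I unfolding psi4_expand by (simp add: intK)
  have "(\<integral>\<omega>. apply_op d n U (sep_state n \<omega>) j1 * cnj (apply_op d n U (sep_state n \<omega>) j2) *
   apply_op d n U (sep_state n \<omega>) j3 * cnj (apply_op d n U (sep_state n \<omega>) j4) \<partial>PiM {..<n} M) =
    (\<Sum>k1\<in>?B. \<Sum>k2\<in>?B. \<Sum>k3\<in>?B. \<Sum>k4\<in>?B.
      (U j1 k1 * cnj (U j2 k2) * U j3 k3 * cnj (U j4 k4)) * (\<integral>\<omega>. mono4 n k1 k2 k3 k4 \<omega> \<partial>PiM {..<n} M))"
    unfolding psi4_expand by (simp add: intK)
  also have "\<dots> = (\<Sum>k1\<in>?B. \<Sum>k2\<in>?B. \<Sum>k3\<in>?B. \<Sum>k4\<in>?B.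
      (U j1 k1 * cnj (U j2 k2) * U j3 k3 * cnj (U j4 k4)) * (?C *
      (\<Sum>x\<in>Pow {..<n}. if k2 = merge_idx x k1 k3 \<and> k4 = merge_idx x k3 k1 then 1 else 0)))"
    by (intro sum.cong refl) (simp add: mi2)
  also have "\<dots> = ?C * (\<Sum>k1\<in>?B. \<Sum>k2\<in>?B. \<Sum>k3\<in>?B. \<Sum>k4\<in>?B.
      (U j1 k1 * cnj (U j2 k2) * U j3 k3 * cnj (U j4 k4)) *
      (\<Sum>x\<in>Pow {..<n}. if k2 = merge_idx x k1 k3 \<and> k4 = merge_idx x k3 k1 then 1 else 0))"
    by (simp add: sum_distrib_left mult_ac)
  also have "(\<Sum>k1\<in>?B. \<Sum>k2\<in>?B. \<Sum>k3\<in>?B. \<Sum>k4\<in>?B.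
      (U j1 k1 * cnj (U j2 k2) * U j3 k3 * cnj (U j4 k4)) *
      (\<Sum>x\<in>Pow {..<n}. if k2 = merge_idx x k1 k3 \<and> k4 = merge_idx x k3 k1 then 1 else 0)) =
    (\<Sum>x\<in>Pow {..<n}. \<Sum>k1\<in>?B. \<Sum>k3\<in>?B.
        U j1 k1 * cnj (U j2 (merge_idx x k1 k3)) * U j3 k3 * cnj (U j4 (merge_idx x k3 k1)))"
    by (rule collapse[where c = "\<lambda>k1 k2 k3 k4. U j1 k1 * cnj (U j2 k2) * U j3 k3 * cnj (U j4 k4)"])
       (auto intro: merge_in2)
  finally show ?E .
qed

lemma unitary_col:
  assumes U: "unitary_op d n U" and k: "k \<in> Bs d {..<n}"
  shows "(\<Sum>l\<in>Bs d {..<n}. (cmod (U l k))\<^sup>2) = 1"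
proof -
  have "(\<Sum>l\<in>Bs d {..<n}. cnj (U l k) * U l k) = 1"
    using U k unfolding unitary_op_def basis_Bs by auto
  moreover have "cnj z * z = complex_of_real ((cmod z)\<^sup>2)" for z
    by (simp add: complex_mult_cnj cmod_power2 mult.commute)
  ultimately have "complex_of_real (\<Sum>l\<in>Bs d {..<n}. (cmod (U l k))\<^sup>2) = 1" by simp
  then show ?thesis by (simp only: of_real_eq_1_iff)
qed

lemma frob:
  assumes U: "unitary_op d n U"
  shows "(\<Sum>j\<in>Bs d {..<n}. \<Sum>k\<in>Bs d {..<n}. (cmod (U j k))\<^sup>2) = (\<Prod>i<n. real (d i))"
proof -
  have "(\<Sum>j\<in>Bs d {..<n}. \<Sum>k\<in>Bs d {..<n}. (cmod (U j k))\<^sup>2) = (\<Sum>k\<in>Bs d {..<n}. \<Sum>j\<in>Bs d {..<n}. (cmod (U j k))\<^sup>2)"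
    by (rule sum.swap)
  also have "\<dots> = (\<Sum>k\<in>Bs d {..<n}. 1)" by (intro sum.cong refl unitary_col[OF U])
  also have "\<dots> = (\<Prod>i<n. real (d i))" by (simp add: card_Bs)
  finally show ?thesis .
qed

lemma Tx_bound:
  assumes U: "unitary_op d n U" and p: "p \<subseteq> {..<n}" and x: "x \<subseteq> {..<n}"
  shows "(\<Prod>i<n. real (d i))\<^sup>2 / real (min ((\<Prod>i\<in>p. d i) * (\<Prod>i\<in>x. d i)) ((\<Prod>i\<in>{..<n} - p. d i) * (\<Prod>i\<in>{..<n} - x. d i)))
   \<le> Re (\<Sum>b\<in>Bs d ({..<n} - p). \<Sum>b'\<in>Bs d ({..<n} - p). \<Sum>a\<in>Bs d p. \<Sum>a'\<in>Bs d p.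
          \<Sum>k1\<in>Bs d {..<n}. \<Sum>k3\<in>Bs d {..<n}.
      U (merge_idx p a b) k1 * cnj (U (merge_idx p a b') (merge_idx x k1 k3)) *
      U (merge_idx p a' b') k3 * cnj (U (merge_idx p a' b) (merge_idx x k3 k1)))"
proof -
  let ?Bq = "Bs d ({..<n} - p)" and ?Bp = "Bs d p" and ?Bx = "Bs d x" and ?Bc = "Bs d ({..<n} - x)"
  let ?B = "Bs d {..<n}"
  define f where "f a s b t = U (merge_idx p a b) (merge_idx x s t)" for a s b t
  have fp: "finite p" "finite x" using p x by (auto intro: finite_subset)
  note sw = sum.swap[of _ ?Bc ?Bq] sum.swap[of _ ?Bp ?Bq] sum.swap[of _ ?Bx ?Bq]
            sum.swap[of _ ?Bp ?Bc] sum.swap[of _ ?Bx ?Bc] sum.swap[of _ ?Bx ?Bp]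
  have T: "(\<Sum>b\<in>?Bq. \<Sum>b'\<in>?Bq. \<Sum>a\<in>?Bp. \<Sum>a'\<in>?Bp. \<Sum>k1\<in>?B. \<Sum>k3\<in>?B.
      U (merge_idx p a b) k1 * cnj (U (merge_idx p a b') (merge_idx x k1 k3)) *
      U (merge_idx p a' b') k3 * cnj (U (merge_idx p a' b) (merge_idx x k3 k1)))
    = (\<Sum>b\<in>?Bq. \<Sum>b'\<in>?Bq. \<Sum>t1\<in>?Bc. \<Sum>t3\<in>?Bc. \<Sum>a\<in>?Bp. \<Sum>a'\<in>?Bp. \<Sum>s1\<in>?Bx. \<Sum>s3\<in>?Bx.
      f a s1 b t1 * cnj (f a s1 b' t3) * f a' s3 b' t3 * cnj (f a' s3 b t1))"
    unfolding split_sum[OF finite_lessThan x, where d = d] merge_merge f_def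
    by (simp only: sw)
  have N: "(\<Sum>b\<in>?Bq. \<Sum>t\<in>?Bc. \<Sum>a\<in>?Bp. \<Sum>s\<in>?Bx. (cmod (f a s b t))\<^sup>2) = (\<Prod>i<n. real (d i))"
  proof -
    have "(\<Sum>j\<in>?B. \<Sum>k\<in>?B. (cmod (U j k))\<^sup>2) = (\<Sum>j\<in>?B. \<Sum>s\<in>?Bx. \<Sum>t\<in>?Bc. (cmod (U j (merge_idx x s t)))\<^sup>2)"
      by (intro sum.cong refl split_sum[OF finite_lessThan x])
    also have "\<dots> = (\<Sum>a\<in>?Bp. \<Sum>b\<in>?Bq. \<Sum>s\<in>?Bx. \<Sum>t\<in>?Bc. (cmod (U (merge_idx p a b) (merge_idx x s t)))\<^sup>2)"
      by (rule split_sum[OF finite_lessThan p])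
    also have "\<dots> = (\<Sum>b\<in>?Bq. \<Sum>t\<in>?Bc. \<Sum>a\<in>?Bp. \<Sum>s\<in>?Bx. (cmod (f a s b t))\<^sup>2)"
      unfolding f_def by (simp only: sw)
    finally show ?thesis using frob[OF U] by simp
  qed
  have cards: "card ?Bp * card ?Bx = (\<Prod>i\<in>p. d i) * (\<Prod>i\<in>x. d i)"
              "card ?Bq * card ?Bc = (\<Prod>i\<in>{..<n} - p. d i) * (\<Prod>i\<in>{..<n} - x. d i)"
    using fp by (simp_all add: card_Bs)
  show ?thesis
    using GLmin[of ?Bp ?Bx ?Bq ?Bc f] fp unfolding T N cards by simp
qed

lemma pur_expand:
  "purity d n p \<psi> = Re (\<Sum>b\<in>Bs d ({..<n} - p). \<Sum>b'\<in>Bs d ({..<n} - p). \<Sum>a\<in>Bs d p. \<Sum>a'\<in>Bs d p.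
     \<psi> (merge_idx p a b) * cnj (\<psi> (merge_idx p a b')) * \<psi> (merge_idx p a' b') * cnj (\<psi> (merge_idx p a' b)))"
  unfolding purity_def reduced_state_def Bs_def sum_product by (simp add: mult.assoc)

lemma main_bip:
  fixes M :: "nat \<Rightarrow> (nat \<Rightarrow> complex) measure"
  assumes d1: "\<And>i. i < n \<Longrightarrow> 1 \<le> d i"
    and UI: "\<And>i. i < n \<Longrightarrow> unitarily_invariant_state_measure (d i) (M i)"
    and U: "unitary_op d n U" and p: "p \<subseteq> {..<n}"
  shows "integrable (PiM {..<n} M) (\<lambda>\<omega>. tau_bip d n p (apply_op d n U (sep_state n \<omega>)))"
    and "eps_bip d n M U p \<le> eps_tilde_bip d n p"
proof -
  let ?Bq = "Bs d ({..<n} - p)" and ?Bp = "Bs d p" and ?B = "Bs d {..<n}"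
  have PS: "prob_space (PiM {..<n} M)"
    using UI by (intro prob_space_PiM) (auto simp: unitarily_invariant_state_measure_def)
  interpret PS: prob_space "PiM {..<n} M" by (rule PS)
  define \<psi> where "\<psi> \<omega> = apply_op d n U (sep_state n \<omega>)" for \<omega>
  define P where "P \<omega> = (\<Sum>b\<in>?Bq. \<Sum>b'\<in>?Bq. \<Sum>a\<in>?Bp. \<Sum>a'\<in>?Bp.
     \<psi> \<omega> (merge_idx p a b) * cnj (\<psi> \<omega> (merge_idx p a b')) * \<psi> \<omega> (merge_idx p a' b') * cnj (\<psi> \<omega> (merge_idx p a' b)))" for \<omega>
  define Cr where "Cr = (\<Prod>i<n. 1 / (real (d i) * (real (d i) + 1)))"
  define T where "T x = (\<Sum>b\<in>?Bq. \<Sum>b'\<in>?Bq. \<Sum>a\<in>?Bp. \<Sum>a'\<in>?Bp. \<Sum>k1\<in>?B. \<Sum>k3\<in>?B.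
      U (merge_idx p a b) k1 * cnj (U (merge_idx p a b') (merge_idx x k1 k3)) *
      U (merge_idx p a' b') k3 * cnj (U (merge_idx p a' b) (merge_idx x k3 k1)))" for x
  have C: "(\<Prod>i<n. 1 / (of_nat (d i) * (of_nat (d i) + 1)) :: complex) = complex_of_real Cr"
    unfolding Cr_def by simp
  have intP': "integrable (PiM {..<n} M) (\<lambda>\<omega>. \<psi> \<omega> (merge_idx p a b) * cnj (\<psi> \<omega> (merge_idx p a b')) * \<psi> \<omega> (merge_idx p a' b') * cnj (\<psi> \<omega> (merge_idx p a' b)))" for a b a' b'
    unfolding \<psi>_def by (rule E4(1)[OF d1 UI])
  have intP: "integrable (PiM {..<n} M) P"
    unfolding P_def by (simp add: intP')
  have "integral\<^sup>L (PiM {..<n} M) P = (\<Sum>b\<in>?Bq. \<Sum>b'\<in>?Bq. \<Sum>a\<in>?Bp. \<Sum>a'\<in>?Bp.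
     complex_of_real Cr * (\<Sum>x\<in>Pow {..<n}. \<Sum>k1\<in>?B. \<Sum>k3\<in>?B.
        U (merge_idx p a b) k1 * cnj (U (merge_idx p a b') (merge_idx x k1 k3)) *
        U (merge_idx p a' b') k3 * cnj (U (merge_idx p a' b) (merge_idx x k3 k1))))"
    unfolding P_def \<psi>_def by (simp add: E4(1)[OF d1 UI] E4(2)[OF d1 UI] C)
  also have "\<dots> = complex_of_real Cr * (\<Sum>x\<in>Pow {..<n}. T x)"
    unfolding T_def by (simp only: sum_distrib_left[symmetric] sum.swap[of _ _ "Pow {..<n}"])
  finally have IP: "integral\<^sup>L (PiM {..<n} M) P = complex_of_real Cr * (\<Sum>x\<in>Pow {..<n}. T x)" .
  show "integrable (PiM {..<n} M) (\<lambda>\<omega>. tau_bip d n p (apply_op d n U (sep_state n \<omega>)))"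
    unfolding tau_bip_def pur_expand \<psi>_def[symmetric] P_def[symmetric]
    using intP by (intro integrable_mult_right integrable_diff integrable_Re PS.integrable_const) auto
  have eb: "eps_bip d n M U p = 2 - 2 * Re (integral\<^sup>L (PiM {..<n} M) P)"
  proof -
    have "eps_bip d n M U p = (\<integral>\<omega>. 2 * (1 - Re (P \<omega>)) \<partial>PiM {..<n} M)"
      unfolding eps_bip_def tau_bip_def pur_expand \<psi>_def[symmetric] P_def[symmetric] ..
    also have "\<dots> = 2 * (1 - (\<integral>\<omega>. Re (P \<omega>) \<partial>PiM {..<n} M))"
      using intP by (simp add: PS.prob_space)
    also have "\<dots> = 2 - 2 * Re (integral\<^sup>L (PiM {..<n} M) P)"
      using intP by simp
    finally show ?thesis .
  qed
  define m where "m x = min ((\<Prod>i\<in>p. d i) * (\<Prod>i\<in>x. d i)) ((\<Prod>i\<in>{..<n} - p. d i) * (\<Prod>i\<in>{..<n} - x. d i))" for x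
  have mpos: "1 \<le> m x" if "x \<in> Pow {..<n}" for x
  proof -
    have "1 \<le> (\<Prod>i\<in>S. d i)" if "S \<subseteq> {..<n}" for S
      using that d1 by (intro prod_ge_1) auto
    then show ?thesis using that p unfolding m_def by (auto intro!: one_le_mult_iff[THEN iffD2])
  qed
  have sum_m: "2 ^ n - (\<Sum>x\<in>Pow {..<n}. (real (m x) - 1) / real (m x)) = (\<Sum>x\<in>Pow {..<n}. 1 / real (m x))"
  proof -
    have e1: "(\<Sum>x\<in>Pow {..<n}. (real (m x) - 1) / real (m x)) = (\<Sum>x\<in>Pow {..<n}. 1 - 1 / real (m x))"
    proof (rule sum.cong[OF refl])
      fix x assume x: "x \<in> Pow {..<n}"
      have "real (m x) \<noteq> 0" using mpos[OF x] by linarith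
      then show "(real (m x) - 1) / real (m x) = 1 - 1 / real (m x)" by (simp add: diff_divide_distrib)
    qed
    have e2: "(\<Sum>x\<in>Pow {..<n}. 1 - 1 / real (m x)) = real (card (Pow {..<n::nat})) - (\<Sum>x\<in>Pow {..<n}. 1 / real (m x))"
      by (simp only: sum_subtractf sum_constant)
    have e3: "real (card (Pow {..<n::nat})) = 2 ^ n" by (simp add: card_Pow)
    show ?thesis unfolding e1 e2 e3 by simp
  qed
  have K: "(\<Prod>i<n. real (d i) / (real (d i) + 1)) = Cr * (\<Prod>i<n. real (d i))\<^sup>2"
  proof -
    have "Cr * (\<Prod>i<n. real (d i))\<^sup>2 = (\<Prod>i<n. 1 / (real (d i) * (real (d i) + 1)) * (real (d i))\<^sup>2)"
      unfolding Cr_def power2_eq_square prod.distrib by simp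
    also have "\<dots> = (\<Prod>i<n. real (d i) / (real (d i) + 1))"
    proof (intro prod.cong refl)
      fix i assume "i \<in> {..<n}"
      then have h1: "real (d i) \<noteq> 0" using d1 by fastforce
      have h2: "real (d i) + 1 \<noteq> 0" by (metis of_nat_Suc of_nat_eq_0_iff add.commute nat.distinct(1))
      show "1 / (real (d i) * (real (d i) + 1)) * (real (d i))\<^sup>2 = real (d i) / (real (d i) + 1)"
      proof -
        have "1 / (real (d i) * (real (d i) + 1)) * (real (d i))\<^sup>2 = (real (d i) * real (d i)) / (real (d i) * (real (d i) + 1))"
          by (simp add: power2_eq_square)
        also have "\<dots> = real (d i) / (real (d i) + 1)"
          by (rule mult_divide_mult_cancel_left[OF h1])
        finally show ?thesis .
      qed
    qed
    finally show ?thesis by simp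
  qed
  have Cr0: "0 \<le> Cr" unfolding Cr_def by (intro prod_nonneg) auto
  have "(\<Prod>i<n. real (d i) / (real (d i) + 1)) * (\<Sum>x\<in>Pow {..<n}. 1 / real (m x))
      = Cr * (\<Sum>x\<in>Pow {..<n}. (\<Prod>i<n. real (d i))\<^sup>2 / real (m x))"
    unfolding K by (simp add: sum_distrib_left)
  also have "\<dots> \<le> Cr * (\<Sum>x\<in>Pow {..<n}. Re (T x))"
  proof (rule mult_left_mono[OF sum_mono Cr0])
    fix x assume x: "x \<in> Pow {..<n}"
    show "(\<Prod>i<n. real (d i))\<^sup>2 / real (m x) \<le> Re (T x)"
      unfolding m_def T_def by (rule Tx_bound[OF U p]) (use x in auto)
  qed
  also have "\<dots> = Re (integral\<^sup>L (PiM {..<n} M) P)"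
    unfolding IP by (simp add: Re_sum)
  finally have key: "(\<Prod>i<n. real (d i) / (real (d i) + 1)) * (\<Sum>x\<in>Pow {..<n}. 1 / real (m x))
      \<le> Re (integral\<^sup>L (PiM {..<n} M) P)" .
  show "eps_bip d n M U p \<le> eps_tilde_bip d n p"
    unfolding eb eps_tilde_bip_def Let_def m_def[symmetric] sum_m using key by simp
qed

theorem theorem5:
  fixes n :: nat and d :: "nat \<Rightarrow> nat"
    and M :: "nat \<Rightarrow> (nat \<Rightarrow> complex) measure"
    and U :: "(nat \<Rightarrow> nat) \<Rightarrow> (nat \<Rightarrow> nat) \<Rightarrow> complex"
  assumes "n \<ge> 2"
    and "\<And>i. i < n \<Longrightarrow> d i \<ge> 1"
    and "\<And>i. i < n \<Longrightarrow> unitarily_invariant_state_measure (d i) (M i)"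
    and "unitary_op d n U"
  shows "(\<forall>p. nontrivial_bip n p \<longrightarrow> eps_bip d n M U p \<le> eps_tilde_bip d n p)
         \<and> eps_one d n M U \<le> eps_tilde_one d n"
proof
  note d1 = assms(2) and UI = assms(3) and U = assms(4)
  show "\<forall>p. nontrivial_bip n p \<longrightarrow> eps_bip d n M U p \<le> eps_tilde_bip d n p"
    using main_bip(2)[OF d1 UI U] unfolding nontrivial_bip_def by blast
  have fin: "finite (unordered_bips n)"
    by (rule finite_subset[of _ "Pow {..<n}"]) (auto simp: unordered_bips_def)
  have sub: "p \<subseteq> {..<n}" if "p \<in> unordered_bips n" for p
    using that by (simp add: unordered_bips_def)
  have c0: "0 \<le> (1 / (2 ^ (n - 1) - 1) :: real)"
  proof -
    have "(1::real) \<le> 2 ^ (n - 1)" by simp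
    then show ?thesis by simp
  qed
  have "eps_one d n M U = (1 / (2 ^ (n - 1) - 1)) * (\<Sum>p\<in>unordered_bips n. eps_bip d n M U p)"
    unfolding eps_one_def one_tangle_def eps_bip_def
    using main_bip(1)[OF d1 UI U sub] by simp
  also have "\<dots> \<le> (1 / (2 ^ (n - 1) - 1)) * (\<Sum>p\<in>unordered_bips n. eps_tilde_bip d n p)"
    using c0 main_bip(2)[OF d1 UI U sub] by (intro mult_left_mono sum_mono) auto
  also have "\<dots> = eps_tilde_one d n" unfolding eps_tilde_one_def ..
  finally show "eps_one d n M U \<le> eps_tilde_one d n" .
qed

end
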